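(* Let $n$ be an integer and $r>0$. Then the function $F(\eta)=\eta^{2}\frac{I_n'(\eta^{-1}r)}{I_n(\eta^{-1}r)}$ is strictly monotonically increasing in $\eta\in(0,\infty)$.
   Context: $I_n$ denotes the modified Bessel function of the first kind of order $n$ (with $I_{-n}=I_n$ for integer $n$). *)

theory Defs
  imports "HOL-Analysis.Analysis"
begin

text \<open>Modified Bessel function of the first kind of integer order n (real argument),
  given by its power series; for negative integer order we use I_{-n} = I_n.\<close>
definition besselI :: "int \<Rightarrow> real \<Rightarrow> real" where
  "besselI n x = (\<Sum>k. (x / 2) ^ (2 * k + nat \<bar>n\<bar>) / (fact k * fact (k + nat \<bar>n\<bar>)))"

end

theory Submission
  imports Defs
begin

definition cB :: "nat \<Rightarrow> nat \<Rightarrow> real" where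
  "cB m k = 1 / (fact k * fact (k + m))"
definition cA :: "nat \<Rightarrow> nat \<Rightarrow> real" where
  "cA m k = 1 / (fact k * fact (k + m + 1))"
definition BB :: "nat \<Rightarrow> real \<Rightarrow> real" where
  "BB m t = (\<Sum>k. cB m k * t ^ k)"
definition AA :: "nat \<Rightarrow> real \<Rightarrow> real" where
  "AA m t = (\<Sum>k. cA m k * t ^ k)"

lemma summable_aux:
  assumes "\<And>k. 0 \<le> c k" "\<And>k. c k \<le> inverse (fact k)"
  shows "summable (\<lambda>k. c k * (t::real) ^ k)"
proof (rule summable_comparison_test[OF _ summable_exp[of "\<bar>t\<bar>"]])
  show "\<exists>N. \<forall>n\<ge>N. norm (c n * t ^ n) \<le> inverse (fact n) * \<bar>t\<bar> ^ n"
    using assms by (auto simp: abs_mult power_abs intro!: mult_right_mono)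
qed

lemma cB_bounds: "0 \<le> cB m k" "cB m k \<le> inverse (fact k)"
proof -
  show "0 \<le> cB m k" by (simp add: cB_def)
  have "fact k * 1 \<le> fact k * (fact (k+m) :: real)"
    by (intro mult_left_mono) auto
  then show "cB m k \<le> inverse (fact k)" unfolding cB_def
    by (simp add: divide_simps)
qed

lemma cA_bounds: "0 \<le> cA m k" "cA m k \<le> inverse (fact k)"
  using cB_bounds[of "m+1" k] by (simp_all add: cA_def cB_def)

lemma summable_B: "summable (\<lambda>k. cB m k * (t::real) ^ k)"
  by (rule summable_aux[OF cB_bounds])
lemma summable_A: "summable (\<lambda>k. cA m k * (t::real) ^ k)"
  by (rule summable_aux[OF cA_bounds])

lemma diffs_cB: "diffs (cB m) = cA m"
proof
  fix k
  have "fact (Suc k + m) = (fact (k + m + 1) :: real)" by simp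
  then show "diffs (cB m) k = cA m k"
    unfolding diffs_def cB_def cA_def
    by (simp add: fact_Suc divide_simps del: of_nat_Suc)
qed

lemma DERIV_BB: "(BB m has_field_derivative AA m t) (at t)"
proof -
  have "((\<lambda>x. \<Sum>n. cB m n * x ^ n) has_field_derivative (\<Sum>n. diffs (cB m) n * t ^ n)) (at t)"
    by (rule termdiffs_strong[OF summable_B[of m "\<bar>t\<bar> + 1"]]) simp
  then show ?thesis unfolding diffs_cB BB_def[abs_def] AA_def by simp
qed

lemma BB_pos: "t > 0 \<Longrightarrow> BB m t > 0"
  unfolding BB_def by (rule suminf_pos[OF summable_B]) (simp add: cB_def)
lemma AA_pos: "t > 0 \<Longrightarrow> AA m t > 0"
  unfolding AA_def by (rule suminf_pos[OF summable_A]) (simp add: cA_def)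

lemma cA_cB: "cA m k = cB m k / (real k + real m + 1)"
  unfolding cA_def cB_def by (simp add: fact_Suc[of "k+m", simplified] divide_simps algebra_simps)

lemma pair_nonneg_le:
  assumes "i \<le> j" "0 < t" "t \<le> (t'::real)"
  shows "0 \<le> (cA m i * cB m j - cA m j * cB m i) * (t ^ i * t' ^ j - t ^ j * t' ^ i)"
proof (rule mult_nonneg_nonneg)
  have "cB m i * cB m j / (real j + real m + 1) \<le> cB m i * cB m j / (real i + real m + 1)"
    using assms(1) by (intro divide_left_mono mult_nonneg_nonneg cB_bounds) auto
  then show "0 \<le> cA m i * cB m j - cA m j * cB m i"
    unfolding cA_cB by (simp add: algebra_simps)
  have "t ^ (j - i) \<le> t' ^ (j - i)" using assms by (intro power_mono) auto
  then have "t ^ i * t' ^ i * t ^ (j - i) \<le> t ^ i * t' ^ i * t' ^ (j - i)"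
    using assms by (intro mult_left_mono) auto
  moreover have "t ^ j = t ^ i * t ^ (j - i)" "t' ^ j = t' ^ i * t' ^ (j - i)"
    using assms(1) by (simp_all flip: power_add)
  ultimately show "0 \<le> t ^ i * t' ^ j - t ^ j * t' ^ i"
    by (simp add: algebra_simps)
qed

lemma pair_nonneg:
  assumes "0 < t" "t \<le> (t'::real)"
  shows "0 \<le> (cA m i * cB m j - cA m j * cB m i) * (t ^ i * t' ^ j - t ^ j * t' ^ i)"
proof (cases "i \<le> j")
  case True then show ?thesis using pair_nonneg_le assms by blast
next
  case False
  then have "0 \<le> (cA m j * cB m i - cA m i * cB m j) * (t ^ j * t' ^ i - t ^ i * t' ^ j)"
    using pair_nonneg_le assms by simp
  then show ?thesis by (simp add: algebra_simps)
qed

lemma finite_ineq: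
  assumes "0 < t" "t \<le> (t'::real)"
  shows "(\<Sum>i<N. cA m i * t' ^ i) * (\<Sum>j<N. cB m j * t ^ j)
       \<le> (\<Sum>i<N. cA m i * t ^ i) * (\<Sum>j<N. cB m j * t' ^ j)"
proof -
  define D where "D i j = cA m i * cB m j * (t ^ i * t' ^ j - t' ^ i * t ^ j)" for i j
  define S where "S = (\<Sum>i<N. \<Sum>j<N. D i j)"
  have S1: "(\<Sum>i<N. cA m i * t ^ i) * (\<Sum>j<N. cB m j * t' ^ j)
       - (\<Sum>i<N. cA m i * t' ^ i) * (\<Sum>j<N. cB m j * t ^ j) = S"
    unfolding S_def D_def sum_product sum_subtractf[symmetric]
    by (intro sum.cong refl) (simp add: algebra_simps)
  have S2: "S = (\<Sum>i<N. \<Sum>j<N. D j i)" unfolding S_def by (rule sum.swap)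
  have "2 * S = (\<Sum>i<N. \<Sum>j<N. D i j + D j i)"
    by (subst mult_2, subst S2, subst S_def) (simp add: sum.distrib)
  also have "\<dots> \<ge> 0"
  proof (intro sum_nonneg)
    fix i j
    have "D i j + D j i = (cA m i * cB m j - cA m j * cB m i) * (t ^ i * t' ^ j - t ^ j * t' ^ i)"
      unfolding D_def by (simp add: algebra_simps)
    then show "0 \<le> D i j + D j i" using pair_nonneg[OF assms] by simp
  qed
  finally show ?thesis using S1 by linarith
qed

lemma AB_mono:
  assumes "0 < t" "t \<le> (t'::real)"
  shows "AA m t' * BB m t \<le> AA m t * BB m t'"
proof (rule LIMSEQ_le)
  show "(\<lambda>N. (\<Sum>i<N. cA m i * t' ^ i) * (\<Sum>j<N. cB m j * t ^ j)) \<longlonglongrightarrow> AA m t' * BB m t"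
    unfolding AA_def BB_def by (intro tendsto_mult summable_LIMSEQ summable_A summable_B)
  show "(\<lambda>N. (\<Sum>i<N. cA m i * t ^ i) * (\<Sum>j<N. cB m j * t' ^ j)) \<longlonglongrightarrow> AA m t * BB m t'"
    unfolding AA_def BB_def by (intro tendsto_mult summable_LIMSEQ summable_A summable_B)
qed (use finite_ineq[OF assms] in auto)


lemma besselI_eq: "besselI n x = (x/2) ^ nat \<bar>n\<bar> * BB (nat \<bar>n\<bar>) (x^2/4)"
proof -
  define m where "m = nat \<bar>n\<bar>"
  have "besselI n x = (\<Sum>k. (x/2) ^ m * (cB m k * (x^2/4) ^ k))"
    unfolding besselI_def m_def[symmetric]
  proof (intro suminf_cong)
    fix k
    have "(x/2) ^ (2 * k + m) = (x/2)^m * ((x/2)^2)^k" by (simp add: power_add power_mult)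
    also have "(x/2)^2 = x^2/4" by (simp add: power_divide)
    finally show "(x/2) ^ (2 * k + m) / (fact k * fact (k + m)) = (x/2) ^ m * (cB m k * (x^2/4) ^ k)"
      by (simp add: cB_def)
  qed
  also have "\<dots> = (x/2) ^ m * BB m (x^2/4)"
    unfolding BB_def by (rule suminf_mult[OF summable_B])
  finally show ?thesis unfolding m_def .
qed

lemma besselI_fun: "besselI n = (\<lambda>x. (x/2) ^ nat \<bar>n\<bar> * BB (nat \<bar>n\<bar>) (x^2/4))"
  using besselI_eq by blast

lemma ratio_eq:
  assumes "x > 0"
  shows "deriv (besselI n) x / besselI n x
       = real (nat \<bar>n\<bar>) / x + x / 2 * (AA (nat \<bar>n\<bar>) (x^2/4) / BB (nat \<bar>n\<bar>) (x^2/4))"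
proof -
  define m where "m = nat \<bar>n\<bar>"
  have d: "((\<lambda>x. (x/2) ^ m * BB m (x^2/4)) has_real_derivative
      (real m * (x/2) ^ (m - 1) * (1/2) * BB m (x^2/4) + (x/2)^m * (AA m (x^2/4) * (2 * x / 4)))) (at x)"
    by (rule derivative_eq_intros DERIV_chain2[OF DERIV_BB] refl | simp)+
  have B: "BB m (x^2/4) > 0" using assms by (intro BB_pos) simp
  have de: "deriv (besselI n) x = real m * (x/2) ^ (m - 1) * (1/2) * BB m (x^2/4) + (x/2)^m * (AA m (x^2/4) * (2 * x / 4))"
    unfolding besselI_fun m_def[symmetric] using DERIV_imp_deriv[OF d] .
  have "real m * (x/2) ^ (m - 1) * (1/2) = real m / x * (x/2)^m"
  proof (cases m)
    case (Suc k) then show ?thesis using assms by (simp add: field_simps)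
  qed simp
  then show ?thesis unfolding de besselI_eq m_def[symmetric] using assms B
    by (simp add: field_simps)
qed


theorem corollary2p1:
  fixes n :: int and r :: real
  assumes "r > 0"
  shows "strict_mono_on {0<..}
           (\<lambda>\<eta>::real. \<eta>\<^sup>2 * (deriv (besselI n) (r / \<eta>) / besselI n (r / \<eta>)))"
proof (rule strict_mono_onI)
  define m where "m = nat \<bar>n\<bar>"
  define R where "R t = AA m t / BB m t" for t
  define T where "T \<eta> = (r / \<eta>)^2 / 4" for \<eta> :: real
  have eq: "\<eta>\<^sup>2 * (deriv (besselI n) (r / \<eta>) / besselI n (r / \<eta>))
       = real m * \<eta>^3 / r + r * \<eta> / 2 * R (T \<eta>)" if "\<eta> > 0" for \<eta>
    unfolding ratio_eq[OF divide_pos_pos[OF assms that]] m_def[symmetric] R_def T_def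
    using that assms by (simp add: field_simps power2_eq_square power3_eq_cube)
  fix a b :: real
  assume a: "a \<in> {0<..}" and b: "b \<in> {0<..}" and ab: "a < b"
  have Ta: "T a > 0" and Tb: "T b > 0" using a b assms by (simp_all add: T_def)
  have "T b \<le> T a" unfolding T_def using a b ab assms
    by (intro divide_right_mono power_mono divide_left_mono) auto
  then have "AA m (T a) * BB m (T b) \<le> AA m (T b) * BB m (T a)"
    using AB_mono Tb by blast
  then have Rle: "R (T a) \<le> R (T b)" unfolding R_def
    using BB_pos[OF Ta] BB_pos[OF Tb] by (simp add: divide_simps)
  have Rpos: "R (T a) > 0" unfolding R_def using BB_pos[OF Ta] AA_pos[OF Ta] by simp
  have "a * R (T a) < b * R (T a)" using Rpos ab by simp
  also have "\<dots> \<le> b * R (T b)" using Rle b by (intro mult_left_mono) auto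
  finally have 1: "r / 2 * (a * R (T a)) < r / 2 * (b * R (T b))" using assms by simp
  have "a^3 \<le> b^3" using a ab by (intro power_mono) auto
  then have 2: "real m * a^3 / r \<le> real m * b^3 / r" using assms
    by (intro divide_right_mono mult_left_mono) auto
  show "a\<^sup>2 * (deriv (besselI n) (r / a) / besselI n (r / a))
      < b\<^sup>2 * (deriv (besselI n) (r / b) / besselI n (r / b))"
    unfolding eq[OF a[simplified]] eq[OF b[simplified]] using 1 2 by (simp add: algebra_simps)
qed

end
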